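(* Let $G$ be a regular subsequential method of sequential convergence. If a subset $F$ of $\mathbb{R}$ is $G$-sequentially compact, then $F$ is Abel sequentially compact.
   Context: Let $s$ be the space of all real sequences. A method is a linear function $G$ defined on a linear subspace $c_G\subseteq s$ into $\mathbb{R}$; $\mathbf{p}$ is $G$-convergent to $\ell$ if $\mathbf{p}\in c_G$ and $G(\mathbf{p})=\ell$. $G$ is regular if every convergent sequence $\mathbf{p}$ is $G$-convergent with $G(\mathbf{p})=\lim\mathbf{p}$; $G$ is subsequential if whenever $G(\mathbf{p})=\ell$ there is a subsequence of $\mathbf{p}$ converging (in the ordinary sense) to $\ell$. $F$ is $G$-sequentially compact if every sequence of points of $F$ has a $G$-convergent subsequence $\mathbf{r}$ with $G(\mathbf{r})\in F$. A sequence $(p_n)_{n\ge0}$ is Abel convergent to $\ell$ if $\sum_{k=0}^{\infty}p_k x^k$ converges for every $0\le x<1$ and $\lim_{x\to 1^-}(1-x)\sum_{k=0}^{\infty}p_k x^k=\ell$. $F$ is Abel sequentially compact if every sequence of points of $F$ has a subsequence Abel convergent to a limit in $F$. *)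

theory Defs
  imports "HOL-Analysis.Analysis"
begin

definition is_method :: "(nat \<Rightarrow> real) set \<Rightarrow> ((nat \<Rightarrow> real) \<Rightarrow> real) \<Rightarrow> bool" where
  "is_method cG G \<longleftrightarrow>
     (\<lambda>n. 0) \<in> cG \<and>
     (\<forall>p\<in>cG. \<forall>q\<in>cG. (\<lambda>n. p n + q n) \<in> cG) \<and>
     (\<forall>c. \<forall>p\<in>cG. (\<lambda>n. c * p n) \<in> cG) \<and>
     (\<forall>p\<in>cG. \<forall>q\<in>cG. G (\<lambda>n. p n + q n) = G p + G q) \<and>
     (\<forall>c. \<forall>p\<in>cG. G (\<lambda>n. c * p n) = c * G p)"

definition G_regular :: "(nat \<Rightarrow> real) set \<Rightarrow> ((nat \<Rightarrow> real) \<Rightarrow> real) \<Rightarrow> bool" where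
  "G_regular cG G \<longleftrightarrow> (\<forall>p. convergent p \<longrightarrow> p \<in> cG \<and> G p = lim p)"

definition G_subsequential :: "(nat \<Rightarrow> real) set \<Rightarrow> ((nat \<Rightarrow> real) \<Rightarrow> real) \<Rightarrow> bool" where
  "G_subsequential cG G \<longleftrightarrow>
     (\<forall>p\<in>cG. \<exists>r::nat \<Rightarrow> nat. strict_mono r \<and> (p \<circ> r) \<longlonglongrightarrow> G p)"

definition G_seq_compact ::
  "(nat \<Rightarrow> real) set \<Rightarrow> ((nat \<Rightarrow> real) \<Rightarrow> real) \<Rightarrow> real set \<Rightarrow> bool" where
  "G_seq_compact cG G F \<longleftrightarrow>
     (\<forall>p. (\<forall>n. p n \<in> F) \<longrightarrow>
        (\<exists>r::nat \<Rightarrow> nat. strict_mono r \<and> (p \<circ> r) \<in> cG \<and> G (p \<circ> r) \<in> F))"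

definition Abel_convergent :: "(nat \<Rightarrow> real) \<Rightarrow> real \<Rightarrow> bool" where
  "Abel_convergent p l \<longleftrightarrow>
     (\<forall>x::real. 0 \<le> x \<and> x < 1 \<longrightarrow> summable (\<lambda>k. p k * x ^ k)) \<and>
     ((\<lambda>x. (1 - x) * (\<Sum>k. p k * x ^ k)) \<longlongrightarrow> l) (at_left 1)"

definition Abel_seq_compact :: "real set \<Rightarrow> bool" where
  "Abel_seq_compact F \<longleftrightarrow>
     (\<forall>p. (\<forall>n. p n \<in> F) \<longrightarrow>
        (\<exists>(r::nat \<Rightarrow> nat) l. strict_mono r \<and> l \<in> F \<and> Abel_convergent (p \<circ> r) l))"

end

theory Submission
  imports Defs
begin

lemma bdd_power_summable:
  fixes a :: "nat \<Rightarrow> real"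
  assumes "\<And>k. \<bar>a k\<bar> \<le> M" "0 \<le> x" "x < 1"
  shows "summable (\<lambda>k. a k * x ^ k)"
proof (rule summable_comparison_test')
  show "summable (\<lambda>k. M * x ^ k)"
    using assms by (intro summable_mult summable_geometric) auto
  fix n :: nat
  show "norm (a n * x ^ n) \<le> M * x ^ n"
    using assms(1)[of n] assms(2) by (simp add: abs_mult mult_right_mono)
qed

lemma abel_zero:
  fixes d :: "nat \<Rightarrow> real"
  assumes d: "d \<longlonglongrightarrow> 0" and M: "\<And>k. \<bar>d k\<bar> \<le> M"
  shows "((\<lambda>x. (1 - x) * (\<Sum>k. d k * x ^ k)) \<longlongrightarrow> 0) (at_left 1)"
proof (rule tendstoI)
  fix e :: real assume e: "e > 0"
  then have "e/2 > 0" by simp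
  from LIMSEQ_D[OF d this] obtain N where N: "\<And>k. k \<ge> N \<Longrightarrow> \<bar>d k\<bar> < e/2"
    by auto
  define B where "B = (\<Sum>k\<in>{..<N}. \<bar>d k\<bar>)"
  have B0: "B \<ge> 0" unfolding B_def by (intro sum_nonneg) auto
  define b where "b = max 0 (1 - e / (2 * (B + 1)))"
  have "b < 1" unfolding b_def using e B0 by auto
  have "\<forall>\<^sub>F x in at_left 1. x \<in> {b<..<1}"
    by (rule eventually_at_left_real[OF \<open>b < 1\<close>])
  then show "\<forall>\<^sub>F x in at_left 1. dist ((1 - x) * (\<Sum>k. d k * x ^ k)) 0 < e"
  proof (rule eventually_mono)
    fix x assume x: "x \<in> {b<..<1}"
    then have x0: "0 \<le> x" and x1: "x < 1" and xb: "1 - e / (2 * (B + 1)) < x"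
      unfolding b_def by auto
    have s1: "summable (\<lambda>k. d k * x ^ k)"
      by (rule bdd_power_summable[OF M x0 x1])
    have s2: "summable (\<lambda>k. \<bar>d k\<bar> * x ^ k)"
      by (rule bdd_power_summable[of _ M]) (use M x0 x1 in auto)
    define h where "h k = (if k \<in> {..<N} then \<bar>d k\<bar> else 0) + e/2 * x ^ k" for k
    have hs: "h sums (B + e/2 * (1 / (1 - x)))"
      unfolding h_def B_def
      by (intro sums_add sums_mult sums_If_finite_set geometric_sums) (use x0 x1 in auto)
    have "\<bar>\<Sum>k. d k * x ^ k\<bar> \<le> (\<Sum>k. \<bar>d k * x ^ k\<bar>)"
      using summable_rabs[of "\<lambda>k. d k * x ^ k"] s2 x0
      by (simp add: abs_mult)
    also have "\<dots> \<le> (\<Sum>k. h k)"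
    proof (rule suminf_le)
      fix k
      have "\<bar>d k\<bar> * x ^ k \<le> h k"
      proof (cases "k < N")
        case True
        have "\<bar>d k\<bar> * x ^ k \<le> \<bar>d k\<bar> * 1"
          using x0 x1 by (intro mult_left_mono power_le_one) auto
        moreover have "0 \<le> e/2 * x^k" using e x0 by simp
        ultimately show ?thesis unfolding h_def using True by simp
      next
        case False
        then have "\<bar>d k\<bar> \<le> e/2" using N[of k] by simp
        then have "\<bar>d k\<bar> * x ^ k \<le> e/2 * x ^ k"
          using x0 by (intro mult_right_mono) auto
        then show ?thesis unfolding h_def using False by simp
      qed
      then show "\<bar>d k * x ^ k\<bar> \<le> h k" using x0 by (simp add: abs_mult)
    next
      show "summable (\<lambda>k. \<bar>d k * x ^ k\<bar>)" using s2 x0 by (simp add: abs_mult)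
      show "summable h" using hs by (rule sums_summable)
    qed
    also have "\<dots> = B + e/2 * (1 / (1 - x))" using hs by (rule sums_unique[symmetric])
    finally have bound: "\<bar>\<Sum>k. d k * x ^ k\<bar> \<le> B + e/2 * (1 / (1 - x))" .
    have "\<bar>(1 - x) * (\<Sum>k. d k * x ^ k)\<bar> = (1 - x) * \<bar>\<Sum>k. d k * x ^ k\<bar>"
      using x1 by (simp add: abs_mult)
    also have "\<dots> \<le> (1 - x) * (B + e/2 * (1 / (1 - x)))"
      using bound x1 by (intro mult_left_mono) auto
    also have "\<dots> = (1 - x) * B + e/2" using x1 by (simp add: field_simps)
    also have "\<dots> < e"
    proof -
      have "1 - x < e / (2 * (B + 1))" using xb by simp
      then have "(1 - x) * (B + 1) < e / 2"
        using B0 by (simp add: field_simps)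
      moreover have "(1 - x) * B \<le> (1 - x) * (B + 1)" using x1 by simp
      ultimately show ?thesis by linarith
    qed
    finally show "dist ((1 - x) * (\<Sum>k. d k * x ^ k)) 0 < e" by simp
  qed
qed

lemma abel_regular:
  fixes q :: "nat \<Rightarrow> real"
  assumes q: "q \<longlonglongrightarrow> l"
  shows "Abel_convergent q l"
proof -
  have "Bseq q" using q by (intro convergent_imp_Bseq convergentI)
  then obtain K where K: "\<And>k. \<bar>q k\<bar> \<le> K" using BseqE[of q] by (metis real_norm_def)
  define d where "d k = q k - l" for k
  have dM: "\<bar>d k\<bar> \<le> K + \<bar>l\<bar>" for k using K[of k] unfolding d_def by linarith
  have d0: "d \<longlonglongrightarrow> 0" unfolding d_def using tendsto_diff[OF q tendsto_const[of l]] by simp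
  have summ: "\<forall>x::real. 0 \<le> x \<and> x < 1 \<longrightarrow> summable (\<lambda>k. q k * x ^ k)"
    using bdd_power_summable[OF K] by auto
  have eq: "(1 - x) * (\<Sum>k. q k * x ^ k) = (1 - x) * (\<Sum>k. d k * x ^ k) + l"
    if x: "0 < x" "x < 1" for x :: real
  proof -
    have sd: "summable (\<lambda>k. d k * x ^ k)" using bdd_power_summable[OF dM, of x] x by auto
    have sg: "summable (\<lambda>k. l * x ^ k)" using x by (intro summable_mult summable_geometric) auto
    have "(\<Sum>k. q k * x ^ k) = (\<Sum>k. d k * x ^ k + l * x ^ k)"
      unfolding d_def by (simp add: algebra_simps)
    also have "\<dots> = (\<Sum>k. d k * x ^ k) + (\<Sum>k. l * x ^ k)"
      by (rule suminf_add[OF sd sg, symmetric])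
    also have "(\<Sum>k. l * x ^ k) = l * (1 / (1 - x))"
      using x by (simp add: suminf_mult suminf_geometric summable_geometric)
    finally show ?thesis using x by (simp add: field_simps)
  qed
  have "((\<lambda>x. (1 - x) * (\<Sum>k. d k * x ^ k) + l) \<longlongrightarrow> 0 + l) (at_left 1)"
    by (intro tendsto_add abel_zero[OF d0 dM] tendsto_const)
  then have lim: "((\<lambda>x. (1 - x) * (\<Sum>k. q k * x ^ k)) \<longlongrightarrow> l) (at_left 1)"
    apply (simp only: add_0_left)
    apply (erule tendsto_cong[THEN iffD1, rotated])
    apply (rule eventually_at_left_1)
    using eq by simp
  show ?thesis unfolding Abel_convergent_def using summ lim by blast
qed

theorem theorem13:
  fixes cG :: "(nat \<Rightarrow> real) set" and G :: "(nat \<Rightarrow> real) \<Rightarrow> real" and F :: "real set"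
  assumes "is_method cG G"
    and "G_regular cG G"
    and "G_subsequential cG G"
    and "G_seq_compact cG G F"
  shows "Abel_seq_compact F"
  unfolding Abel_seq_compact_def
proof (intro allI impI)
  fix p :: "nat \<Rightarrow> real" assume pF: "\<forall>n. p n \<in> F"
  from assms(4) pF obtain r :: "nat \<Rightarrow> nat" where r: "strict_mono r" "(p \<circ> r) \<in> cG" "G (p \<circ> r) \<in> F"
    unfolding G_seq_compact_def by blast
  from assms(3) r(2) obtain s :: "nat \<Rightarrow> nat" where s: "strict_mono s" "((p \<circ> r) \<circ> s) \<longlonglongrightarrow> G (p \<circ> r)"
    unfolding G_subsequential_def by blast
  have "strict_mono (r \<circ> s)" using r(1) s(1) by (rule strict_mono_o)
  moreover have "Abel_convergent (p \<circ> (r \<circ> s)) (G (p \<circ> r))"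
    using abel_regular[OF s(2)] by (simp add: o_assoc)
  ultimately show "\<exists>r l. strict_mono r \<and> l \<in> F \<and> Abel_convergent (p \<circ> r) l"
    using r(3) by blast
qed

end
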